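(* For $i\in\{1,2\}$ let $\mathcal{P}_i=\mathrm{con}(\mathcal{C}_i)=\mathrm{gen}(\mathcal{G}_i)\subseteq\mathbb{R}^n$ be non-empty NNC polyhedra, with $\mathcal{C}_i$ finite constraint systems and $\mathcal{G}_i=(R_i,P_i,C_i)$ extended generator systems. Then $\mathcal{P}_1\uplus\mathcal{P}_2\neq\mathcal{P}_1\cup\mathcal{P}_2$ if and only if, for some $i,j\in\{1,2\}$ with $i\neq j$, there exists a generator $g_i$ of $\mathcal{G}_i$ that saturates a constraint $\beta_i\in\mathcal{C}_i$ violated by $\mathcal{P}_j$, and at least one of the following holds: (1) $g_i$ is a ray or a closure point of $\mathcal{G}_i$ (i.e., $g_i\in R_i$ or $g_i\in C_i$) that is not subsumed by $\mathcal{P}_j$; (2) $g_i$ is a point of $\mathcal{G}_i$ (i.e., $g_i\in P_i$), $\beta_i$ is non-strict, and $g_i\notin\mathbb{C}(\mathcal{P}_j)$; (3) $\beta_i$ is strict and is saturated by some point $\mathbf{p}\in(\mathcal{P}_1\uplus\mathcal{P}_2)\setminus\mathcal{P}_j$.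
   Context: A constraint is either a non-strict inequality $\langle\mathbf{a},\mathbf{x}\rangle\le b$ or a strict inequality $\langle\mathbf{a},\mathbf{x}\rangle<b$, with $\mathbf{a}\in\mathbb{R}^n\setminus\{\mathbf{0}\}$, $b\in\mathbb{R}$ (equalities being treated as pairs of non-strict inequalities). For a finite set $\mathcal{C}$ of constraints, $\mathrm{con}(\mathcal{C})$ is the set of points of $\mathbb{R}^n$ satisfying all of them; such sets are the NNC (not necessarily closed) polyhedra. An extended generator system is a triple $(R,P,C)$ of finite subsets of $\mathbb{R}^n$, $R=\{\mathbf{r}_k\}$, $P=\{\mathbf{p}_k\}$, $C=\{\mathbf{c}_k\}$, with $\mathbf{0}\notin R$, and $\mathrm{gen}((R,P,C))=\{\sum\rho_k\mathbf{r}_k+\sum\sigma_k\mathbf{p}_k+\sum\tau_k\mathbf{c}_k : \rho_k,\sigma_k,\tau_k\ge0,\ (\sigma_k)_k\neq\mathbf{0},\ \sum\sigma_k+\sum\tau_k=1\}$; elements of $R$, $P$, $C$ are called rays, points and closure points of the system, respectively. $\mathbb{C}(S)$ denotes the topological closure of $S$. For a non-empty NNC polyhedron $\mathcal{P}$, a vector $\mathbf{r}\neq\mathbf{0}$ is a ray of $\mathcal{P}$ if $\mathbf{p}+\rho\mathbf{r}\in\mathcal{P}$ for all $\mathbf{p}\in\mathcal{P}$, $\rho\ge0$; a vector $\mathbf{c}$ is a closure point of $\mathcal{P}$ if $\mathbf{c}\in\mathbb{C}(\mathcal{P})$. A polyhedron $\mathcal{P}$ subsumes a point (resp. ray, closure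 point) $\mathbf{v}$ if $\mathbf{v}$ is a point in $\mathcal{P}$ (resp. a ray of $\mathcal{P}$, a closure point of $\mathcal{P}$). A point or closure point $\mathbf{p}$ saturates a constraint $\langle\mathbf{a},\mathbf{x}\rangle\bowtie b$ ($\bowtie\in\{<,\le\}$) if $\langle\mathbf{a},\mathbf{p}\rangle=b$; a ray $\mathbf{r}$ saturates it if $\langle\mathbf{a},\mathbf{r}\rangle=0$. A polyhedron violates a constraint if some point of it does not satisfy it. $\mathcal{P}_1\uplus\mathcal{P}_2$ is the smallest NNC polyhedron containing $\mathcal{P}_1\cup\mathcal{P}_2$; if $\mathcal{P}_i=\mathrm{gen}((R_i,P_i,C_i))$ then $\mathcal{P}_1\uplus\mathcal{P}_2=\mathrm{gen}((R_1\cup R_2,P_1\cup P_2,C_1\cup C_2))$. *)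

theory Defs
  imports "HOL-Analysis.Analysis"
begin

datatype 'v constr = NonStrict 'v real | Strict 'v real

fun constr_normal :: "'v constr \<Rightarrow> 'v" where
  "constr_normal (NonStrict a b) = a"
| "constr_normal (Strict a b) = a"

fun constr_rhs :: "'v constr \<Rightarrow> real" where
  "constr_rhs (NonStrict a b) = b"
| "constr_rhs (Strict a b) = b"

fun is_strict :: "'v constr \<Rightarrow> bool" where
  "is_strict (NonStrict a b) = False"
| "is_strict (Strict a b) = True"

fun satisfies :: "('a::real_inner) \<Rightarrow> 'a constr \<Rightarrow> bool" where
  "satisfies x (NonStrict a b) = (inner a x \<le> b)"
| "satisfies x (Strict a b) = (inner a x < b)"

definition constr_system :: "('a::real_inner) constr set \<Rightarrow> bool" where
  "constr_system Cs \<longleftrightarrow> finite Cs \<and> (\<forall>c\<in>Cs. constr_normal c \<noteq> 0)"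

definition con :: "('a::real_inner) constr set \<Rightarrow> 'a set" where
  "con Cs = {x. \<forall>c\<in>Cs. satisfies x c}"

definition NNC_polyhedron :: "('a::real_inner) set \<Rightarrow> bool" where
  "NNC_polyhedron Q \<longleftrightarrow> (\<exists>Cs. constr_system Cs \<and> Q = con Cs)"

definition gen_system :: "('a::real_vector) set \<Rightarrow> 'a set \<Rightarrow> 'a set \<Rightarrow> bool" where
  "gen_system R P C \<longleftrightarrow> finite R \<and> finite P \<and> finite C \<and> 0 \<notin> R"

definition gen :: "('a::real_vector) set \<Rightarrow> 'a set \<Rightarrow> 'a set \<Rightarrow> 'a set" where
  "gen R P C = {x. \<exists>\<rho> \<sigma> \<tau>.
      (\<forall>r\<in>R. \<rho> r \<ge> 0) \<and> (\<forall>p\<in>P. \<sigma> p \<ge> 0) \<and> (\<forall>c\<in>C. \<tau> c \<ge> 0) \<and>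
      (\<exists>p\<in>P. \<sigma> p \<noteq> 0) \<and> sum \<sigma> P + sum \<tau> C = 1 \<and>
      x = (\<Sum>r\<in>R. \<rho> r *\<^sub>R r) + (\<Sum>p\<in>P. \<sigma> p *\<^sub>R p) + (\<Sum>c\<in>C. \<tau> c *\<^sub>R c)}"

definition poly_hull :: "('a::real_inner) set \<Rightarrow> 'a set" where
  "poly_hull S = \<Inter>{Q. NNC_polyhedron Q \<and> S \<subseteq> Q}"

definition violates :: "('a::real_inner) set \<Rightarrow> 'a constr \<Rightarrow> bool" where
  "violates Q c \<longleftrightarrow> (\<exists>x\<in>Q. \<not> satisfies x c)"

definition ray_of :: "('a::real_vector) set \<Rightarrow> 'a \<Rightarrow> bool" where
  "ray_of Q r \<longleftrightarrow> r \<noteq> 0 \<and> (\<forall>p\<in>Q. \<forall>\<rho>::real. \<rho> \<ge> 0 \<longrightarrow> p + \<rho> *\<^sub>R r \<in> Q)"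

datatype gkind = Ray | Pt | ClosurePt

fun in_gen :: "'a set \<Rightarrow> 'a set \<Rightarrow> 'a set \<Rightarrow> gkind \<Rightarrow> 'a \<Rightarrow> bool" where
  "in_gen R P C Ray g = (g \<in> R)"
| "in_gen R P C Pt g = (g \<in> P)"
| "in_gen R P C ClosurePt g = (g \<in> C)"

fun saturates :: "gkind \<Rightarrow> ('a::real_inner) \<Rightarrow> 'a constr \<Rightarrow> bool" where
  "saturates Ray g c = (inner (constr_normal c) g = 0)"
| "saturates Pt g c = (inner (constr_normal c) g = constr_rhs c)"
| "saturates ClosurePt g c = (inner (constr_normal c) g = constr_rhs c)"

fun subsumes :: "('a::real_normed_vector) set \<Rightarrow> gkind \<Rightarrow> 'a \<Rightarrow> bool" where
  "subsumes Q Ray g = ray_of Q g"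
| "subsumes Q Pt g = (g \<in> Q)"
| "subsumes Q ClosurePt g = (g \<in> closure Q)"

text \<open>The condition of Theorem 4 for an ordered pair (i,j): generator system (R,P,C) and
  constraint system Cs of P_i, polyhedron Qj = P_j, H = P_1 poly-hull P_2.\<close>
definition thm4_cond ::
  "('a::real_inner) set \<Rightarrow> 'a set \<Rightarrow> 'a set \<Rightarrow> 'a constr set \<Rightarrow> 'a set \<Rightarrow> 'a set \<Rightarrow> bool" where
  "thm4_cond R P C Cs Qj H \<longleftrightarrow>
     (\<exists>k g \<beta>. in_gen R P C k g \<and> \<beta> \<in> Cs \<and> saturates k g \<beta> \<and> violates Qj \<beta> \<and>
        ((k \<in> {Ray, ClosurePt} \<and> \<not> subsumes Qj k g)
         \<or> (k = Pt \<and> \<not> is_strict \<beta> \<and> g \<notin> closure Qj)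
         \<or> (is_strict \<beta> \<and> (\<exists>p\<in>H - Qj. saturates Pt p \<beta>))))"

end

theory Submission
  imports Defs
begin

lemma sat_iff: "satisfies x c = (if is_strict c then inner (constr_normal c) x < constr_rhs c
   else inner (constr_normal c) x \<le> constr_rhs c)"
  by (cases c) auto

lemma sat_imp_le: "satisfies x c \<Longrightarrow> inner (constr_normal c) x \<le> constr_rhs c"
  by (cases c) auto

lemma sat_same: "inner (constr_normal c) x = inner (constr_normal c) y \<Longrightarrow> satisfies x c = satisfies y c"
  by (simp add: sat_iff)

lemma inner_seg: "inner a (g + t *\<^sub>R (q - g)) = (1 - t) * inner a g + t * inner a (q::'a::real_inner)"
  by (simp add: inner_add_right inner_diff_right algebra_simps)

lemma sat_mix:
  assumes "inner (constr_normal c) g \<le> constr_rhs c" "satisfies q c" "0 < t" "t \<le> 1"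
  shows "satisfies (g + t *\<^sub>R (q - g)) c"
proof -
  let ?a = "constr_normal c" and ?b = "constr_rhs c"
  have 1: "(1 - t) * inner ?a g \<le> (1 - t) * ?b" using assms by (intro mult_left_mono) auto
  show ?thesis
  proof (cases "is_strict c")
    case True
    then have "inner ?a q < ?b" using assms(2) by (simp add: sat_iff)
    then have "t * inner ?a q < t * ?b" using assms by simp
    then show ?thesis using 1 True by (simp add: sat_iff inner_seg algebra_simps)
  next
    case False
    then have "inner ?a q \<le> ?b" using assms(2) by (simp add: sat_iff)
    then have "t * inner ?a q \<le> t * ?b" using assms by (intro mult_left_mono) auto
    then show ?thesis using 1 False by (simp add: sat_iff inner_seg algebra_simps)
  qed
qed

lemma sat_seg:
  assumes "satisfies g c" "satisfies q c" "0 \<le> t" "t \<le> 1"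
  shows "satisfies (g + t *\<^sub>R (q - g)) c"
proof (cases "t = 0")
  case True then show ?thesis using assms by simp
next
  case False then show ?thesis using sat_mix[OF sat_imp_le[OF assms(1)] assms(2)] assms by auto
qed

lemma con_convex: "convex (con Cs)"
proof (rule convexI)
  fix x y u v assume h: "x \<in> con Cs" "y \<in> con Cs" "0 \<le> u" "0 \<le> (v::real)" "u + v = 1"
  have "u *\<^sub>R x + v *\<^sub>R y = (u + v) *\<^sub>R x + v *\<^sub>R (y - x)"
    by (simp add: algebra_simps)
  then have e: "u *\<^sub>R x + v *\<^sub>R y = x + v *\<^sub>R (y - x)" using h(5) by simp
  show "u *\<^sub>R x + v *\<^sub>R y \<in> con Cs" unfolding e using h sat_seg[of x _ y v] unfolding con_def by auto
qed

lemma NNC_convex: "NNC_polyhedron Q \<Longrightarrow> convex Q"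
  unfolding NNC_polyhedron_def using con_convex by auto

lemma hull_convex: "convex (poly_hull S)"
  unfolding poly_hull_def by (rule convex_Inter) (auto intro: NNC_convex)

lemma hull_sup: "S \<subseteq> poly_hull S"
  unfolding poly_hull_def by auto

lemma hull_sat:
  assumes "constr_normal c \<noteq> 0" "\<And>y. y \<in> S \<Longrightarrow> satisfies y c" "x \<in> poly_hull S"
  shows "satisfies x c"
proof -
  have "NNC_polyhedron (con {c})" unfolding NNC_polyhedron_def constr_system_def using assms by auto
  moreover have "S \<subseteq> con {c}" using assms unfolding con_def by auto
  ultimately have "poly_hull S \<subseteq> con {c}" unfolding poly_hull_def by auto
  then show ?thesis using assms unfolding con_def by auto
qed

lemma hull_mem:
  assumes "\<And>Cs c. constr_system Cs \<Longrightarrow> S \<subseteq> con Cs \<Longrightarrow> c \<in> Cs \<Longrightarrow> satisfies x c"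
  shows "x \<in> poly_hull S"
  unfolding poly_hull_def NNC_polyhedron_def using assms unfolding con_def by blast

lemma small_t:
  fixes K e T :: real assumes "0 \<le> K" "0 < e" "0 < T"
  shows "\<exists>d. 0 < d \<and> d \<le> T \<and> d * K < e"
proof -
  define d where "d = min T (e / (K + 1))"
  have "d > 0" using assms by (simp add: d_def)
  moreover have "d * K \<le> e / (K + 1) * K" using assms by (intro mult_right_mono) (auto simp: d_def)
  moreover have "e / (K + 1) * K < e" using assms by (simp add: field_simps)
  ultimately show ?thesis by (intro exI[of _ d]) (auto simp: d_def)
qed

lemma aff_le:
  fixes u v b :: real assumes "\<And>l. 0 < l \<Longrightarrow> l \<le> 1 \<Longrightarrow> u + l * v \<le> b"
  shows "u \<le> b"
proof (rule ccontr)
  assume "\<not> u \<le> b"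
  then obtain d where d: "0 < d" "d \<le> 1" "d * \<bar>v\<bar> < u - b" using small_t[of "\<bar>v\<bar>" "u - b" 1] by auto
  have "d * (- \<bar>v\<bar>) \<le> d * v" by (rule mult_left_mono) (use d in auto)
  then have "- (d * \<bar>v\<bar>) \<le> d * v" by simp
  then have "u + d * v > b" using d by linarith
  with assms[OF d(1,2)] show False by linarith
qed

lemma ray_le:
  fixes u v b :: real assumes "\<And>l. 0 \<le> l \<Longrightarrow> u + l * v \<le> b"
  shows "v \<le> 0"
proof (rule ccontr)
  assume "\<not> v \<le> 0"
  then have v: "v > 0" by simp
  have "u + ((\<bar>b - u\<bar> + 1) / v) * v \<le> b" by (rule assms) (use v in simp)
  then show False using v by simp
qed

lemma gen_P:
  assumes "finite P" "p \<in> P" shows "p \<in> gen R P C"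
  unfolding gen_def
proof (intro CollectI exI conjI)
  show "\<forall>r\<in>R. (0::real) \<le> (\<lambda>_. 0) r" by simp
  show "\<forall>p'\<in>P. 0 \<le> (\<lambda>p'. if p' = p then 1 else (0::real)) p'" by simp
  show "\<forall>c\<in>C. (0::real) \<le> (\<lambda>_. 0) c" by simp
  show "\<exists>p'\<in>P. (\<lambda>p'. if p' = p then 1 else (0::real)) p' \<noteq> 0" using assms by auto
  show "sum (\<lambda>p'. if p' = p then 1 else (0::real)) P + sum (\<lambda>_. 0) C = 1" using assms by simp
  show "p = (\<Sum>r\<in>R. (\<lambda>_. 0) r *\<^sub>R r) + (\<Sum>p'\<in>P. (if p' = p then 1 else (0::real)) *\<^sub>R p') + (\<Sum>c\<in>C. (\<lambda>_. 0) c *\<^sub>R c)"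
    using assms by (simp add: if_distrib[of "\<lambda>x. x *\<^sub>R _"] cong: if_cong)
qed

lemma gen_cp:
  assumes "finite P" "finite C" "p \<in> P" "c \<in> C" "0 < l" "l \<le> 1"
  shows "c + l *\<^sub>R (p - c) \<in> gen R P C"
  unfolding gen_def
proof (intro CollectI exI conjI)
  show "\<forall>r\<in>R. (0::real) \<le> (\<lambda>_. 0) r" by simp
  show "\<forall>p'\<in>P. 0 \<le> (\<lambda>p'. if p' = p then l else (0::real)) p'" using assms by simp
  show "\<forall>c'\<in>C. 0 \<le> (\<lambda>c'. if c' = c then 1 - l else (0::real)) c'" using assms by simp
  show "\<exists>p'\<in>P. (\<lambda>p'. if p' = p then l else (0::real)) p' \<noteq> 0" using assms by auto
  show "sum (\<lambda>p'. if p' = p then l else (0::real)) P + sum (\<lambda>c'. if c' = c then 1 - l else (0::real)) C = 1"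
    using assms by simp
  have "c + l *\<^sub>R (p - c) = l *\<^sub>R p + (1 - l) *\<^sub>R c" by (simp add: algebra_simps)
  then show "c + l *\<^sub>R (p - c) = (\<Sum>r\<in>R. (\<lambda>_. 0) r *\<^sub>R r) + (\<Sum>p'\<in>P. (if p' = p then l else (0::real)) *\<^sub>R p')
      + (\<Sum>c'\<in>C. (if c' = c then 1 - l else 0) *\<^sub>R c')"
    using assms by (simp add: if_distrib[of "\<lambda>x. x *\<^sub>R _"] cong: if_cong)
qed

lemma gen_ray:
  assumes "finite R" "r \<in> R" "y \<in> gen R P C" "0 \<le> l"
  shows "y + l *\<^sub>R r \<in> gen R P C"
proof -
  obtain \<rho> \<sigma> \<tau> where h: "\<forall>r\<in>R. \<rho> r \<ge> 0" "\<forall>p\<in>P. \<sigma> p \<ge> 0" "\<forall>c\<in>C. \<tau> c \<ge> 0"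
      "\<exists>p\<in>P. \<sigma> p \<noteq> 0" "sum \<sigma> P + sum \<tau> C = 1"
      "y = (\<Sum>r\<in>R. \<rho> r *\<^sub>R r) + (\<Sum>p\<in>P. \<sigma> p *\<^sub>R p) + (\<Sum>c\<in>C. \<tau> c *\<^sub>R c)"
    using assms(3) unfolding gen_def by blast
  define \<rho>' where "\<rho>' = (\<lambda>r'. \<rho> r' + (if r' = r then l else 0))"
  have "(\<Sum>r'\<in>R. \<rho>' r' *\<^sub>R r') = (\<Sum>r'\<in>R. \<rho> r' *\<^sub>R r') + (\<Sum>r'\<in>R. (if r' = r then l else 0) *\<^sub>R r')"
    unfolding \<rho>'_def by (simp add: scaleR_add_left sum.distrib)
  also have "(\<Sum>r'\<in>R. (if r' = r then l else 0) *\<^sub>R r') = l *\<^sub>R r"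
    using assms by (simp add: if_distrib[of "\<lambda>x. x *\<^sub>R _"] cong: if_cong)
  finally have e: "(\<Sum>r'\<in>R. \<rho>' r' *\<^sub>R r') = (\<Sum>r'\<in>R. \<rho> r' *\<^sub>R r') + l *\<^sub>R r" .
  show ?thesis unfolding gen_def
    apply (rule CollectI, rule exI[of _ \<rho>'], rule exI[of _ \<sigma>], rule exI[of _ \<tau>])
    using h assms e by (auto simp: \<rho>'_def algebra_simps)
qed

lemma gen_nonempty: "x \<in> gen R P C \<Longrightarrow> P \<noteq> {}"
  unfolding gen_def by auto

lemma gen_gens_le:
  fixes a :: "'a::real_inner"
  assumes gs: "gen_system R P C" and Q: "Q = gen R P C" "Q \<noteq> {}"
    and le: "\<And>y. y \<in> Q \<Longrightarrow> inner a y \<le> b"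
  shows "\<And>r. r \<in> R \<Longrightarrow> inner a r \<le> 0"
    and "\<And>p. p \<in> P \<Longrightarrow> inner a p \<le> b"
    and "\<And>c. c \<in> C \<Longrightarrow> inner a c \<le> b"
proof -
  have fin: "finite R" "finite P" "finite C" using gs unfolding gen_system_def by auto
  obtain p0 where p0: "p0 \<in> P" using Q gen_nonempty by blast
  have p0Q: "p0 \<in> Q" using gen_P[OF fin(2) p0] Q by simp
  show "inner a p \<le> b" if "p \<in> P" for p using le gen_P[OF fin(2) that] Q by simp
  show "inner a r \<le> 0" if "r \<in> R" for r
  proof (rule ray_le[of "inner a p0" _ b])
    fix l :: real assume "0 \<le> l"
    then have "p0 + l *\<^sub>R r \<in> Q" using gen_ray[OF fin(1) that, of p0 P C l] p0Q Q by simp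
    from le[OF this] show "inner a p0 + l * inner a r \<le> b" by (simp add: inner_add_right)
  qed
  show "inner a c \<le> b" if "c \<in> C" for c
  proof (rule aff_le[of "inner a c" "inner a p0 - inner a c"])
    fix l :: real assume "0 < l" "l \<le> 1"
    then have "c + l *\<^sub>R (p0 - c) \<in> Q" using gen_cp[OF fin(2,3) p0 that] Q by simp
    from le[OF this] show "inner a c + l * (inner a p0 - inner a c) \<le> b" by (simp add: inner_add_right inner_diff_right)
  qed
qed

lemma gen_bound:
  fixes a :: "'a::real_inner"
  assumes fin: "finite R" "finite P" "finite C" and y: "y \<in> gen R P C"
    and r: "\<And>r. r \<in> R \<Longrightarrow> inner a r \<le> 0"
    and p: "\<And>p. p \<in> P \<Longrightarrow> inner a p \<le> M"
    and c: "\<And>c. c \<in> C \<Longrightarrow> inner a c \<le> M"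
  shows "inner a y \<le> M"
proof -
  obtain \<rho> \<sigma> \<tau> where h: "\<forall>r\<in>R. \<rho> r \<ge> 0" "\<forall>p\<in>P. \<sigma> p \<ge> 0" "\<forall>c\<in>C. \<tau> c \<ge> 0"
      "sum \<sigma> P + sum \<tau> C = 1"
      "y = (\<Sum>r\<in>R. \<rho> r *\<^sub>R r) + (\<Sum>p\<in>P. \<sigma> p *\<^sub>R p) + (\<Sum>c\<in>C. \<tau> c *\<^sub>R c)"
    using y unfolding gen_def by blast
  have 1: "(\<Sum>r\<in>R. \<rho> r * inner a r) \<le> 0" using h r by (intro sum_nonpos) (simp add: mult_nonneg_nonpos)
  have 2: "(\<Sum>p\<in>P. \<sigma> p * inner a p) \<le> (\<Sum>p\<in>P. \<sigma> p * M)" using h p by (intro sum_mono mult_left_mono) auto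
  have 3: "(\<Sum>c\<in>C. \<tau> c * inner a c) \<le> (\<Sum>c\<in>C. \<tau> c * M)" using h c by (intro sum_mono mult_left_mono) auto
  have "(\<Sum>p\<in>P. \<sigma> p * M) + (\<Sum>c\<in>C. \<tau> c * M) = M" using h(4)
    by (simp add: sum_distrib_right[symmetric] distrib_right[symmetric])
  moreover have "inner a y = (\<Sum>r\<in>R. \<rho> r * inner a r) + (\<Sum>p\<in>P. \<sigma> p * inner a p) + (\<Sum>c\<in>C. \<tau> c * inner a c)"
    using h(5) by (simp add: inner_add_right inner_sum_right)
  ultimately show ?thesis using 1 2 3 by linarith
qed

lemma rays_sum_in:
  fixes K :: "'a::real_vector set"
  assumes "finite R" "\<forall>r\<in>R. 0 \<le> \<rho> r"
    "\<forall>r\<in>R. \<rho> r \<noteq> 0 \<longrightarrow> (\<forall>y\<in>K. \<forall>l\<ge>0. y + l *\<^sub>R r \<in> K)" "z \<in> K"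
  shows "z + (\<Sum>r\<in>R. \<rho> r *\<^sub>R r) \<in> K"
  using assms
proof (induction R rule: finite_induct)
  case empty then show ?case by simp
next
  case (insert r F)
  have IH: "z + (\<Sum>r\<in>F. \<rho> r *\<^sub>R r) \<in> K"
    by (rule insert.IH) (use insert.prems in blast)+
  have e: "z + (\<Sum>r\<in>insert r F. \<rho> r *\<^sub>R r) = (z + (\<Sum>r\<in>F. \<rho> r *\<^sub>R r)) + \<rho> r *\<^sub>R r"
    using insert(1,2) by (simp add: add_ac)
  show ?case
  proof (cases "\<rho> r = 0")
    case True then show ?thesis unfolding e True using IH by (metis add.right_neutral scale_zero_left)
  next
    case False
    then have "\<forall>y\<in>K. \<forall>l\<ge>0. y + l *\<^sub>R r \<in> K" using insert.prems(2) by blast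
    moreover have "0 \<le> \<rho> r" using insert.prems(1) by blast
    ultimately show ?thesis unfolding e using IH by blast
  qed
qed

lemma gen_in_K:
  fixes a :: "'a::real_inner"
  assumes gs: "gen_system R P C" and m: "m \<in> gen R P C"
    and r: "\<And>r. r \<in> R \<Longrightarrow> inner a r \<le> 0"
    and p: "\<And>p. p \<in> P \<Longrightarrow> inner a p \<le> b"
    and c: "\<And>c. c \<in> C \<Longrightarrow> inner a c \<le> b"
    and mb: "inner a m = b"
    and K: "convex K" "k0 \<in> K"
    and pK: "\<And>p. p \<in> P \<Longrightarrow> inner a p = b \<Longrightarrow> p \<in> K"
    and cK: "\<And>c. c \<in> C \<Longrightarrow> inner a c = b \<Longrightarrow> c \<in> K"
    and rK: "\<And>r y l. r \<in> R \<Longrightarrow> inner a r = 0 \<Longrightarrow> y \<in> K \<Longrightarrow> 0 \<le> l \<Longrightarrow> y + l *\<^sub>R r \<in> K"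
  shows "m \<in> K"
proof -
  have fin: "finite R" "finite P" "finite C" using gs unfolding gen_system_def by auto
  obtain \<rho> \<sigma> \<tau> where h: "\<forall>r\<in>R. \<rho> r \<ge> 0" "\<forall>p\<in>P. \<sigma> p \<ge> 0" "\<forall>c\<in>C. \<tau> c \<ge> 0"
      "sum \<sigma> P + sum \<tau> C = 1"
      "m = (\<Sum>r\<in>R. \<rho> r *\<^sub>R r) + (\<Sum>p\<in>P. \<sigma> p *\<^sub>R p) + (\<Sum>c\<in>C. \<tau> c *\<^sub>R c)"
    using m unfolding gen_def by blast
  define A where "A = (\<Sum>r\<in>R. - (\<rho> r * inner a r))"
  define B where "B = (\<Sum>p\<in>P. \<sigma> p * (b - inner a p))"
  define D where "D = (\<Sum>c\<in>C. \<tau> c * (b - inner a c))"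
  have A0: "\<forall>r\<in>R. 0 \<le> - (\<rho> r * inner a r)" using h r by (simp add: mult_nonneg_nonpos)
  have B0: "\<forall>p\<in>P. 0 \<le> \<sigma> p * (b - inner a p)" using h p by simp
  have D0: "\<forall>c\<in>C. 0 \<le> \<tau> c * (b - inner a c)" using h c by simp
  have "inner a m = (\<Sum>r\<in>R. \<rho> r * inner a r) + (\<Sum>p\<in>P. \<sigma> p * inner a p) + (\<Sum>c\<in>C. \<tau> c * inner a c)"
    using h(5) by (simp add: inner_add_right inner_sum_right)
  moreover have "B = sum \<sigma> P * b - (\<Sum>p\<in>P. \<sigma> p * inner a p)"
    unfolding B_def sum_distrib_right by (simp add: sum_subtractf right_diff_distrib)
  moreover have "D = sum \<tau> C * b - (\<Sum>c\<in>C. \<tau> c * inner a c)"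
    unfolding D_def sum_distrib_right by (simp add: sum_subtractf right_diff_distrib)
  moreover have "A = - (\<Sum>r\<in>R. \<rho> r * inner a r)" unfolding A_def by (simp add: sum_negf)
  moreover have "sum \<sigma> P * b + sum \<tau> C * b = b" using h(4) by (metis distrib_right mult_1)
  ultimately have "A + B + D = 0" using mb by linarith
  moreover have "A \<ge> 0" "B \<ge> 0" "D \<ge> 0" unfolding A_def B_def D_def using A0 B0 D0 by (auto intro: sum_nonneg)
  ultimately have "A = 0" "B = 0" "D = 0" by linarith+
  then have Az: "\<forall>r\<in>R. \<rho> r * inner a r = 0" and Bz: "\<forall>p\<in>P. \<sigma> p * (b - inner a p) = 0"
    and Dz: "\<forall>c\<in>C. \<tau> c * (b - inner a c) = 0"
  proof -
    show "\<forall>r\<in>R. \<rho> r * inner a r = 0"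
      using \<open>A = 0\<close> sum_nonneg_eq_0_iff[of _ "\<lambda>r. - (\<rho> r * inner a r)"] fin(1) A0 unfolding A_def by auto
    show "\<forall>p\<in>P. \<sigma> p * (b - inner a p) = 0"
      using \<open>B = 0\<close> sum_nonneg_eq_0_iff[of _ "\<lambda>p. \<sigma> p * (b - inner a p)"] fin(2) B0 unfolding B_def by auto
    show "\<forall>c\<in>C. \<tau> c * (b - inner a c) = 0"
      using \<open>D = 0\<close> sum_nonneg_eq_0_iff[of _ "\<lambda>c. \<tau> c * (b - inner a c)"] fin(3) D0 unfolding D_def by auto
  qed
  define p' where "p' = (\<lambda>p. if inner a p = b then p else k0)"
  define c' where "c' = (\<lambda>c. if inner a c = b then c else k0)"
  have sp: "(\<Sum>p\<in>P. \<sigma> p *\<^sub>R p) = (\<Sum>p\<in>P. \<sigma> p *\<^sub>R p' p)"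
    by (rule sum.cong) (use Bz in \<open>auto simp: p'_def\<close>)
  have sc: "(\<Sum>c\<in>C. \<tau> c *\<^sub>R c) = (\<Sum>c\<in>C. \<tau> c *\<^sub>R c' c)"
    by (rule sum.cong) (use Dz in \<open>auto simp: c'_def\<close>)
  define w where "w = case_sum \<sigma> \<tau>"
  define yy where "yy = case_sum p' c'"
  have "(\<Sum>j\<in>P <+> C. w j *\<^sub>R yy j) \<in> K"
  proof (rule convex_sum[OF _ K(1)])
    show "finite (P <+> C)" using fin by simp
    show "sum w (P <+> C) = 1" using h(4) fin by (simp add: sum.Plus w_def comp_def)
    show "\<And>i. i \<in> P <+> C \<Longrightarrow> 0 \<le> w i" using h by (auto simp: w_def)
    show "\<And>i. i \<in> P <+> C \<Longrightarrow> yy i \<in> K" using pK cK K by (auto simp: yy_def p'_def c'_def)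
  qed
  moreover have "(\<Sum>j\<in>P <+> C. w j *\<^sub>R yy j) = (\<Sum>p\<in>P. \<sigma> p *\<^sub>R p) + (\<Sum>c\<in>C. \<tau> c *\<^sub>R c)"
    using fin by (simp add: sum.Plus w_def yy_def comp_def sp sc)
  ultimately have zK: "(\<Sum>p\<in>P. \<sigma> p *\<^sub>R p) + (\<Sum>c\<in>C. \<tau> c *\<^sub>R c) \<in> K" by simp
  have "(\<Sum>p\<in>P. \<sigma> p *\<^sub>R p) + (\<Sum>c\<in>C. \<tau> c *\<^sub>R c) + (\<Sum>r\<in>R. \<rho> r *\<^sub>R r) \<in> K"
  proof (rule rays_sum_in[OF fin(1)])
    show "\<forall>r\<in>R. 0 \<le> \<rho> r" using h by simp
    show "\<forall>r\<in>R. \<rho> r \<noteq> 0 \<longrightarrow> (\<forall>y\<in>K. \<forall>l\<ge>0. y + l *\<^sub>R r \<in> K)" using Az rK by auto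
  qed (rule zK)
  then show ?thesis using h(5) by (simp add: algebra_simps)
qed

lemma closure_le:
  fixes a :: "'a::real_inner"
  assumes "\<And>y. y \<in> Q \<Longrightarrow> inner a y \<le> b" "x \<in> closure Q"
  shows "inner a x \<le> b"
proof -
  have "closure Q \<subseteq> {y. inner a y \<le> b}"
    by (rule closure_minimal) (use assms in \<open>auto intro: closed_halfspace_le\<close>)
  then show ?thesis using assms by auto
qed

lemma approach:
  fixes v :: "'a::real_normed_vector"
  assumes "0 < e" "0 < T"
  shows "\<exists>d. 0 < d \<and> d \<le> T \<and> norm (d *\<^sub>R v) < e"
  using small_t[of "norm v" e T] assms by auto

lemma relax_closure:
  fixes x :: "'a::real_inner"
  assumes Q: "Q = con Cs" "p \<in> Q" and le: "\<And>c. c \<in> Cs \<Longrightarrow> inner (constr_normal c) x \<le> constr_rhs c"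
  shows "x \<in> closure Q"
  unfolding closure_approachable
proof (intro allI impI)
  fix e :: real assume "0 < e"
  then obtain d where d: "0 < d" "d \<le> 1" "norm (d *\<^sub>R (p - x)) < e" using approach[of e 1 "p - x"] by auto
  have "x + d *\<^sub>R (p - x) \<in> Q" using Q le sat_mix[OF le _ d(1,2)] unfolding con_def by auto
  moreover have "dist (x + d *\<^sub>R (p - x)) x < e" using d by (simp add: dist_norm)
  ultimately show "\<exists>y\<in>Q. dist y x < e" by blast
qed

lemma ray_closure:
  fixes Q :: "'a::real_normed_vector set"
  assumes "ray_of Q r" "y \<in> closure Q" "0 \<le> l"
  shows "y + l *\<^sub>R r \<in> closure Q"
proof -
  have "(+) (l *\<^sub>R r) ` Q \<subseteq> Q" using assms(1,3) unfolding ray_of_def by (auto simp: add.commute)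
  then have "closure ((+) (l *\<^sub>R r) ` Q) \<subseteq> closure Q" by (rule closure_mono)
  then have "(+) (l *\<^sub>R r) ` closure Q \<subseteq> closure Q" by (simp only: closure_translation)
  then show ?thesis using assms(2) by (auto simp: add.commute)
qed

lemma gen_sat_exists:
  fixes a :: "'a::real_inner"
  assumes gs: "gen_system R P C" and Q: "Q = gen R P C" "Q \<noteq> {}"
    and le: "\<And>y. y \<in> Q \<Longrightarrow> inner a y \<le> b"
    and m: "m \<in> closure Q" "inner a m = b"
  shows "(\<exists>p\<in>P. inner a p = b) \<or> (\<exists>c\<in>C. inner a c = b)"
proof (rule ccontr)
  assume ns: "\<not> ?thesis"
  have fin: "finite R" "finite P" "finite C" using gs unfolding gen_system_def by auto
  have P0: "P \<noteq> {}" using Q gen_nonempty by blast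
  note gl = gen_gens_le[OF gs Q le]
  define M where "M = Max (inner a ` (P \<union> C))"
  have Min: "M \<in> inner a ` (P \<union> C)" unfolding M_def using fin P0 by (intro Max_in) auto
  have Mlt: "M < b" using Min ns gl by fastforce
  have Mge: "\<And>g. g \<in> P \<union> C \<Longrightarrow> inner a g \<le> M" unfolding M_def using fin by (intro Max_ge) auto
  have "\<And>y. y \<in> Q \<Longrightarrow> inner a y \<le> M"
    using gen_bound[OF fin _ gl(1)] Mge Q by blast
  then have "inner a m \<le> M" using closure_le m by blast
  then show False using m Mlt by simp
qed

lemma sat_mono: "inner (constr_normal c) y \<le> inner (constr_normal c) x \<Longrightarrow> satisfies x c \<Longrightarrow> satisfies y c"
  by (cases c) auto

lemma conv_seg:
  fixes S :: "'a::real_vector set"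
  assumes "convex S" "x \<in> S" "q \<in> S" "0 \<le> t" "t \<le> 1"
  shows "x + t *\<^sub>R (q - x) \<in> S"
proof -
  have "x + t *\<^sub>R (q - x) = (1 - t) *\<^sub>R x + t *\<^sub>R q" by (simp add: algebra_simps)
  then show ?thesis using assms convexD[OF assms(1,2,3), of "1 - t" t] by simp
qed

lemma comb_gt:
  fixes A B b t :: real
  assumes "A > b" "B > b" "0 \<le> t" "t \<le> 1"
  shows "(1 - t) * A + t * B > b"
proof -
  have "(1 - t) * A + t * B - b = (1 - t) * (A - b) + t * (B - b)" by (simp add: algebra_simps)
  moreover have "(1 - t) * (A - b) + t * (B - b) > 0"
  proof (cases "t = 0")
    case True then show ?thesis using assms by simp
  next
    case False
    then have "t * (B - b) > 0" using assms by simp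
    moreover have "(1 - t) * (A - b) \<ge> 0" using assms by simp
    ultimately show ?thesis by linarith
  qed
  ultimately show ?thesis by linarith
qed

lemma violates_by_hull:
  assumes cs: "constr_system Cs" "c \<in> Cs" and Qi: "Qi \<subseteq> {y. satisfies y c}"
    and x: "x \<in> poly_hull (Qi \<union> Qj)" "\<not> satisfies x c"
  shows "violates Qj c"
proof (rule ccontr)
  assume "\<not> violates Qj c"
  then have "\<And>y. y \<in> Qi \<union> Qj \<Longrightarrow> satisfies y c" using Qi unfolding violates_def by auto
  moreover have "constr_normal c \<noteq> 0" using cs unfolding constr_system_def by auto
  ultimately have "satisfies x c" using hull_sat x by blast
  then show False using x by simp
qed

lemma caseII:
  fixes Qi Qj :: "'a::real_inner set"
  assumes csi: "constr_system Csi" and gsi: "gen_system Ra Pa Ca"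
    and Qi: "Qi = con Csi" "Qi = gen Ra Pa Ca" "Qi \<noteq> {}"
    and x: "x \<in> poly_hull (Qi \<union> Qj)" "x \<in> closure Qi" "x \<notin> Qi" "x \<notin> Qj"
  shows "thm4_cond Ra Pa Ca Csi Qj (poly_hull (Qi \<union> Qj))"
proof -
  obtain \<beta> where \<beta>: "\<beta> \<in> Csi" "\<not> satisfies x \<beta>" using x Qi unfolding con_def by auto
  have satQ: "\<And>y. y \<in> Qi \<Longrightarrow> satisfies y \<beta>" using \<beta> Qi unfolding con_def by auto
  have le: "\<And>y. y \<in> Qi \<Longrightarrow> inner (constr_normal \<beta>) y \<le> constr_rhs \<beta>" using satQ sat_imp_le by blast
  have xle: "inner (constr_normal \<beta>) x \<le> constr_rhs \<beta>" using closure_le[OF le x(2)] .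
  have str: "is_strict \<beta>" and xeq: "inner (constr_normal \<beta>) x = constr_rhs \<beta>"
    using \<beta>(2) xle by (auto simp: sat_iff split: if_splits)
  have viol: "violates Qj \<beta>" using violates_by_hull[OF csi \<beta>(1) _ x(1) \<beta>(2)] satQ by blast
  have "(\<exists>p\<in>Pa. inner (constr_normal \<beta>) p = constr_rhs \<beta>) \<or> (\<exists>c\<in>Ca. inner (constr_normal \<beta>) c = constr_rhs \<beta>)"
    using gen_sat_exists[OF gsi Qi(2,3) le x(2) xeq] .
  then obtain k g where kg: "in_gen Ra Pa Ca k g" "saturates k g \<beta>"
    by (metis in_gen.simps(2,3) saturates.simps(2,3))
  show ?thesis unfolding thm4_cond_def
    using kg \<beta>(1) viol str x(1,4) xeq by (intro exI[of _ k] exI[of _ g] exI[of _ \<beta>]) auto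
qed

lemma caseI:
  fixes Qi Qj :: "'a::real_inner set"
  assumes csi: "constr_system Csi" and csj: "constr_system Csj" and gsj: "gen_system Rb Pb Cb"
    and Qi: "Qi = con Csi" "Qi \<noteq> {}"
    and Qj: "Qj = con Csj" "Qj = gen Rb Pb Cb"
    and x: "x \<in> poly_hull (Qi \<union> Qj)" "x \<notin> Qj" "x \<notin> closure Qi"
  shows "thm4_cond Rb Pb Cb Csj Qi (poly_hull (Qi \<union> Qj))"
proof -
  have x1': "x \<in> poly_hull (Qj \<union> Qi)" using x(1) by (simp add: Un_commute)
  define H where "H = poly_hull (Qi \<union> Qj)"
  have xH: "x \<in> H" using x H_def by simp
  obtain p0 where p0: "p0 \<in> Qi" using Qi by auto
  obtain \<beta>1 where b1: "\<beta>1 \<in> Csi" "inner (constr_normal \<beta>1) x > constr_rhs \<beta>1"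
    using relax_closure[OF Qi(1) p0, of x] x(3) by force
  define a1 where "a1 = constr_normal \<beta>1"
  define c1 where "c1 = constr_rhs \<beta>1"
  have a1nz: "a1 \<noteq> 0" using csi b1 unfolding constr_system_def a1_def by auto
  have Qi_le: "\<And>y. y \<in> Qi \<Longrightarrow> inner a1 y \<le> c1"
    using Qi(1) b1(1) sat_imp_le unfolding con_def a1_def c1_def by blast
  obtain q where q: "q \<in> Qj" "inner a1 q > c1"
  proof -
    have "\<exists>q\<in>Qj. inner a1 q > c1"
    proof (rule ccontr)
      assume "\<not> ?thesis"
      then have U: "\<And>y. y \<in> Qi \<union> Qj \<Longrightarrow> satisfies y (NonStrict a1 c1)" using Qi_le by force
      have "satisfies x (NonStrict a1 c1)"
        by (rule hull_sat[of "NonStrict a1 c1" "Qi \<union> Qj"]) (use a1nz x(1) U in auto)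
      then show False using b1 unfolding a1_def c1_def by simp
    qed
    then show ?thesis using that by blast
  qed
  have qH: "q \<in> H" using q hull_sup H_def by blast
  define s where "s = (\<lambda>t::real. x + t *\<^sub>R (q - x))"
  define F0 where "F0 = (\<lambda>\<beta>. inner (constr_normal \<beta>) x - constr_rhs \<beta>)"
  define F1 where "F1 = (\<lambda>\<beta>. inner (constr_normal \<beta>) q - constr_rhs \<beta>)"
  define e where "e = (\<lambda>\<beta>. F0 \<beta> / (F0 \<beta> - F1 \<beta>))"
  define V where "V = {\<beta>\<in>Csj. \<not> satisfies x \<beta>}"
  have val: "\<And>\<beta> t. inner (constr_normal \<beta>) (s t) - constr_rhs \<beta> = (1 - t) * F0 \<beta> + t * F1 \<beta>"
    unfolding s_def F0_def F1_def inner_seg by (simp add: algebra_simps)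
  have finV: "finite V" using csj unfolding V_def constr_system_def by auto
  have V0: "V \<noteq> {}" using x(2) Qj(1) unfolding V_def con_def by auto
  have qsat: "\<And>\<beta>. \<beta> \<in> Csj \<Longrightarrow> satisfies q \<beta>" using q Qj(1) unfolding con_def by auto
  have F1le: "\<And>\<beta>. \<beta> \<in> Csj \<Longrightarrow> F1 \<beta> \<le> 0 \<and> (is_strict \<beta> \<longrightarrow> F1 \<beta> < 0)"
  proof -
    fix \<beta> assume "\<beta> \<in> Csj"
    then have "satisfies q \<beta>" by (rule qsat)
    then show "F1 \<beta> \<le> 0 \<and> (is_strict \<beta> \<longrightarrow> F1 \<beta> < 0)"
      unfolding F1_def by (cases "is_strict \<beta>") (auto simp: sat_iff)
  qed
  have F0ge: "\<And>\<beta>. \<beta> \<in> V \<Longrightarrow> F0 \<beta> \<ge> 0 \<and> (\<not> is_strict \<beta> \<longrightarrow> F0 \<beta> > 0)"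
  proof -
    fix \<beta> assume "\<beta> \<in> V"
    then have "\<not> satisfies x \<beta>" unfolding V_def by auto
    then show "F0 \<beta> \<ge> 0 \<and> (\<not> is_strict \<beta> \<longrightarrow> F0 \<beta> > 0)"
      unfolding F0_def by (cases "is_strict \<beta>") (auto simp: sat_iff)
  qed
  have den: "\<And>\<beta>. \<beta> \<in> V \<Longrightarrow> F0 \<beta> - F1 \<beta> > 0"
  proof -
    fix \<beta> assume h: "\<beta> \<in> V"
    then have "\<beta> \<in> Csj" unfolding V_def by auto
    then show "F0 \<beta> - F1 \<beta> > 0" using F1le F0ge[OF h] by (cases "is_strict \<beta>") force+
  qed
  have valV: "\<And>\<beta> t. \<beta> \<in> V \<Longrightarrow> (1 - t) * F0 \<beta> + t * F1 \<beta> = (F0 \<beta> - F1 \<beta>) * (e \<beta> - t)"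
  proof -
    fix \<beta> t assume h: "\<beta> \<in> V"
    have "(F0 \<beta> - F1 \<beta>) * e \<beta> = F0 \<beta>" using den[OF h] unfolding e_def by simp
    then show "(1 - t) * F0 \<beta> + t * F1 \<beta> = (F0 \<beta> - F1 \<beta>) * (e \<beta> - t)"
      by (simp add: right_diff_distrib algebra_simps)
  qed
  have e01: "\<And>\<beta>. \<beta> \<in> V \<Longrightarrow> 0 \<le> e \<beta> \<and> e \<beta> \<le> 1"
  proof -
    fix \<beta> assume h: "\<beta> \<in> V"
    then have "\<beta> \<in> Csj" unfolding V_def by auto
    then have "F0 \<beta> \<ge> 0" "F1 \<beta> \<le> 0" "F0 \<beta> - F1 \<beta> > 0" using F1le F0ge[OF h] den[OF h] by auto
    then show "0 \<le> e \<beta> \<and> e \<beta> \<le> 1" unfolding e_def by (auto simp: divide_le_eq_1)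
  qed
  obtain bs where bs: "bs \<in> V" "\<And>\<beta>. \<beta> \<in> V \<Longrightarrow> e \<beta> \<le> e bs"
  proof -
    have "Max (e ` V) \<in> e ` V" using finV V0 by (intro Max_in) auto
    then obtain bs where "bs \<in> V" "e bs = Max (e ` V)" by auto
    moreover have "\<And>\<beta>. \<beta> \<in> V \<Longrightarrow> e \<beta> \<le> Max (e ` V)" using finV by auto
    ultimately show ?thesis using that by auto
  qed
  define ts where "ts = e bs"
  have ts01: "0 \<le> ts" "ts \<le> 1" using e01[OF bs(1)] ts_def by auto
  define m where "m = s ts"
  have mH: "m \<in> H" unfolding m_def s_def using conv_seg[OF hull_convex[of "Qi \<union> Qj", folded H_def] xH qH ts01] by simp
  have m1: "inner a1 m > c1"
    unfolding m_def s_def inner_seg using comb_gt[OF _ q(2) ts01] b1 unfolding a1_def c1_def by auto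
  have mQi: "m \<notin> closure Qi" using closure_le[OF Qi_le] m1 by force
  then have mQi': "m \<notin> Qi" using closure_subset by blast
  have m_le: "\<And>\<beta>. \<beta> \<in> Csj \<Longrightarrow> inner (constr_normal \<beta>) m \<le> constr_rhs \<beta>"
  proof -
    fix \<beta> assume h: "\<beta> \<in> Csj"
    show "inner (constr_normal \<beta>) m \<le> constr_rhs \<beta>"
    proof (cases "\<beta> \<in> V")
      case True
      have "(F0 \<beta> - F1 \<beta>) * (e \<beta> - ts) \<le> 0" using den[OF True] bs(2)[OF True] ts_def
        by (simp add: mult_nonneg_nonpos)
      then show ?thesis using val[of \<beta> ts] valV[OF True, of ts] m_def by simp
    next
      case False
      then have "satisfies x \<beta>" using h V_def by auto
      then have "satisfies m \<beta>" unfolding m_def s_def using sat_seg[OF _ qsat[OF h] ts01] by blast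
      then show ?thesis by (rule sat_imp_le)
    qed
  qed
  have after: "\<And>t. ts < t \<Longrightarrow> t \<le> 1 \<Longrightarrow> s t \<in> Qj"
  proof -
    fix t assume t: "ts < t" "t \<le> 1"
    have "satisfies (s t) \<beta>" if h: "\<beta> \<in> Csj" for \<beta>
    proof (cases "\<beta> \<in> V")
      case True
      have "(F0 \<beta> - F1 \<beta>) * (e \<beta> - t) < 0" using den[OF True] bs(2)[OF True] ts_def t
        by (simp add: mult_pos_neg)
      then have "inner (constr_normal \<beta>) (s t) < constr_rhs \<beta>" using val[of \<beta> t] valV[OF True, of t] by simp
      then show ?thesis by (simp add: sat_iff)
    next
      case False
      then have "satisfies x \<beta>" using h V_def by auto
      then show ?thesis unfolding s_def using sat_seg[OF _ qsat[OF h]] t ts01 by simp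
    qed
    then show "s t \<in> Qj" using Qj(1) unfolding con_def by auto
  qed
  show ?thesis
  proof (cases "m \<in> Qj")
    case True
    have bsC: "bs \<in> Csj" "\<not> satisfies x bs" using bs(1) V_def by auto
    have eq0: "inner (constr_normal bs) m = constr_rhs bs"
      using val[of bs ts] valV[OF bs(1), of ts] ts_def m_def by simp
    have ns: "\<not> is_strict bs"
    proof
      assume "is_strict bs"
      moreover have "satisfies m bs" using True Qj(1) bsC unfolding con_def by auto
      ultimately show False using eq0 by (simp add: sat_iff)
    qed
    have satQj: "\<And>y. y \<in> Qj \<Longrightarrow> satisfies y bs" using Qj(1) bsC unfolding con_def by auto
    have viol: "violates Qi bs" using violates_by_hull[OF csj bsC(1) _ x1' bsC(2)] satQj by blast
    show ?thesis
    proof (rule ccontr)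
      assume nc: "\<not> ?thesis"
      have leQj: "\<And>y. y \<in> Qj \<Longrightarrow> inner (constr_normal bs) y \<le> constr_rhs bs" using satQj sat_imp_le by blast
      have Qj0: "Qj \<noteq> {}" using q by auto
      note gl = gen_gens_le[OF gsj Qj(2) Qj0 leQj]
      have "m \<in> closure Qi"
      proof (rule gen_in_K[OF gsj _ gl eq0 convex_closure[OF con_convex[of Csi, folded Qi(1)]]])
        show "m \<in> gen Rb Pb Cb" using True Qj by simp
        show "p0 \<in> closure Qi" using p0 closure_subset by blast
        show "p \<in> closure Qi" if "p \<in> Pb" "inner (constr_normal bs) p = constr_rhs bs" for p
        proof (rule ccontr)
          assume "p \<notin> closure Qi"
          then have "thm4_cond Rb Pb Cb Csj Qi (poly_hull (Qi \<union> Qj))" unfolding thm4_cond_def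
            using that bsC(1) viol ns by (intro exI[of _ Pt] exI[of _ p] exI[of _ bs]) auto
          then show False using nc by simp
        qed
        show "c \<in> closure Qi" if "c \<in> Cb" "inner (constr_normal bs) c = constr_rhs bs" for c
        proof (rule ccontr)
          assume "c \<notin> closure Qi"
          then have "thm4_cond Rb Pb Cb Csj Qi (poly_hull (Qi \<union> Qj))" unfolding thm4_cond_def
            using that bsC(1) viol by (intro exI[of _ ClosurePt] exI[of _ c] exI[of _ bs]) auto
          then show False using nc by simp
        qed
        show "y + l *\<^sub>R r \<in> closure Qi" if "r \<in> Rb" "inner (constr_normal bs) r = 0" "y \<in> closure Qi" "0 \<le> l" for r y l
        proof -
          have "ray_of Qi r"
          proof (rule ccontr)
            assume "\<not> ray_of Qi r"
            then have "thm4_cond Rb Pb Cb Csj Qi (poly_hull (Qi \<union> Qj))" unfolding thm4_cond_def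
              using that bsC(1) viol by (intro exI[of _ Ray] exI[of _ r] exI[of _ bs]) auto
            then show False using nc by simp
          qed
          then show ?thesis using ray_closure that by blast
        qed
      qed
      then show False using mQi by simp
    qed
  next
    case False
    then obtain \<beta>2 where b2: "\<beta>2 \<in> Csj" "\<not> satisfies m \<beta>2" using Qj(1) unfolding con_def by auto
    have b2V: "\<beta>2 \<in> V"
    proof (rule ccontr)
      assume "\<beta>2 \<notin> V"
      then have "satisfies x \<beta>2" using b2 V_def by auto
      then have "satisfies m \<beta>2" unfolding m_def s_def using sat_seg[OF _ qsat[OF b2(1)] ts01] by blast
      then show False using b2 by simp
    qed
    have str: "is_strict \<beta>2" and eq2: "inner (constr_normal \<beta>2) m = constr_rhs \<beta>2"
      using b2(2) m_le[OF b2(1)] by (auto simp: sat_iff split: if_splits)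
    have ts1: "ts < 1"
    proof (rule ccontr)
      assume "\<not> ts < 1"
      then have "ts = 1" using ts01 by simp
      then have "m = q" unfolding m_def s_def by simp
      then show False using False q by simp
    qed
    have mcl: "m \<in> closure Qj"
      unfolding closure_approachable
    proof (intro allI impI)
      fix \<epsilon> :: real assume "0 < \<epsilon>"
      then obtain d where d: "0 < d" "d \<le> 1 - ts" "norm (d *\<^sub>R (q - x)) < \<epsilon>"
        using approach[of \<epsilon> "1 - ts" "q - x"] ts1 by auto
      have "s (ts + d) \<in> Qj" using after d by simp
      moreover have "dist (s (ts + d)) m < \<epsilon>" using d unfolding m_def s_def dist_norm
        by (simp add: algebra_simps)
      ultimately show "\<exists>y\<in>Qj. dist y m < \<epsilon>" by blast
    qed
    have satQj: "\<And>y. y \<in> Qj \<Longrightarrow> satisfies y \<beta>2" using Qj(1) b2 unfolding con_def by auto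
    have leQj: "\<And>y. y \<in> Qj \<Longrightarrow> inner (constr_normal \<beta>2) y \<le> constr_rhs \<beta>2" using satQj sat_imp_le by blast
    have Qj0: "Qj \<noteq> {}" using q by auto
    have xb2: "\<not> satisfies x \<beta>2" using b2V V_def by auto
    have viol: "violates Qi \<beta>2" using violates_by_hull[OF csj b2(1) _ x1' xb2] satQj by blast
    have "(\<exists>p\<in>Pb. inner (constr_normal \<beta>2) p = constr_rhs \<beta>2) \<or> (\<exists>c\<in>Cb. inner (constr_normal \<beta>2) c = constr_rhs \<beta>2)"
      using gen_sat_exists[OF gsj Qj(2) Qj0 leQj mcl eq2] .
    then obtain k g where kg: "in_gen Rb Pb Cb k g" "saturates k g \<beta>2"
      by (metis in_gen.simps(2,3) saturates.simps(2,3))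
    show ?thesis unfolding thm4_cond_def
      using kg b2(1) viol str mH mQi' eq2 H_def by (intro exI[of _ k] exI[of _ g] exI[of _ \<beta>2]) auto
  qed
qed

lemma pc_case:
  fixes Qi Qj :: "'a::real_inner set"
  assumes geq: "inner (constr_normal \<beta>) g = constr_rhs \<beta>"
    and q: "q \<in> Qj" "\<not> satisfies q \<beta>" and gcl: "g \<notin> closure Qj"
    and gle: "\<And>Cs c. constr_system Cs \<Longrightarrow> Qi \<union> Qj \<subseteq> con Cs \<Longrightarrow> c \<in> Cs \<Longrightarrow> inner (constr_normal c) g \<le> constr_rhs c"
    and Qi: "Qi \<subseteq> {y. satisfies y \<beta>}"
  shows "\<exists>y\<in>poly_hull (Qi \<union> Qj). y \<notin> Qi \<union> Qj"
proof -
  obtain \<epsilon> where \<epsilon>: "\<epsilon> > 0" "\<And>y. y \<in> Qj \<Longrightarrow> \<not> dist y g < \<epsilon>"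
    using gcl unfolding closure_approachable by auto
  obtain d where d: "0 < d" "d \<le> 1" "norm (d *\<^sub>R (q - g)) < \<epsilon>" using approach[OF \<epsilon>(1), of 1 "q - g"] by auto
  define y where "y = g + d *\<^sub>R (q - g)"
  have "y \<notin> Qj" using \<epsilon>(2)[of y] d unfolding y_def dist_norm by auto
  moreover have "y \<notin> Qi"
  proof
    assume "y \<in> Qi"
    then have sy: "satisfies y \<beta>" using Qi by auto
    have e: "inner (constr_normal \<beta>) y - constr_rhs \<beta> = d * (inner (constr_normal \<beta>) q - constr_rhs \<beta>)"
      unfolding y_def inner_seg using geq by (simp add: algebra_simps)
    show False
    proof (cases "is_strict \<beta>")
      case True
      then have "inner (constr_normal \<beta>) q - constr_rhs \<beta> \<ge> 0" using q(2) by (simp add: sat_iff)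
      then have "d * (inner (constr_normal \<beta>) q - constr_rhs \<beta>) \<ge> 0" using d(1) by simp
      then show False using e sy True by (simp add: sat_iff)
    next
      case False
      then have "inner (constr_normal \<beta>) q - constr_rhs \<beta> > 0" using q(2) by (simp add: sat_iff)
      then have "d * (inner (constr_normal \<beta>) q - constr_rhs \<beta>) > 0" using d(1) by simp
      then show False using e sy False by (simp add: sat_iff)
    qed
  qed
  moreover have "y \<in> poly_hull (Qi \<union> Qj)"
  proof (rule hull_mem)
    fix Cs c assume h: "constr_system Cs" "Qi \<union> Qj \<subseteq> con Cs" "c \<in> Cs"
    have "satisfies q c" using h q unfolding con_def by auto
    then show "satisfies y c" unfolding y_def using sat_mix[OF gle[OF h] _ d(1,2)] by blast
  qed
  ultimately show ?thesis by blast
qed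

lemma cond_imp:
  fixes Qi Qj :: "'a::real_inner set"
  assumes gsi: "gen_system Ra Pa Ca" and Qi: "Qi = con Csi" "Qi = gen Ra Pa Ca" "Qi \<noteq> {}"
    and Qj: "Qj = con Csj"
    and c: "thm4_cond Ra Pa Ca Csi Qj (poly_hull (Qi \<union> Qj))"
  shows "\<exists>y\<in>poly_hull (Qi \<union> Qj). y \<notin> Qi \<union> Qj"
proof -
  have fin: "finite Ra" "finite Pa" "finite Ca" "0 \<notin> Ra" using gsi unfolding gen_system_def by auto
  obtain k g \<beta> where kgb: "in_gen Ra Pa Ca k g" "\<beta> \<in> Csi" "saturates k g \<beta>" "violates Qj \<beta>"
    and alt: "(k \<in> {Ray, ClosurePt} \<and> \<not> subsumes Qj k g)
         \<or> (k = Pt \<and> \<not> is_strict \<beta> \<and> g \<notin> closure Qj)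
         \<or> (is_strict \<beta> \<and> (\<exists>p\<in>poly_hull (Qi \<union> Qj) - Qj. saturates Pt p \<beta>))"
    using c unfolding thm4_cond_def by blast
  obtain q where q: "q \<in> Qj" "\<not> satisfies q \<beta>" using kgb(4) unfolding violates_def by auto
  have satQi: "Qi \<subseteq> {y. satisfies y \<beta>}" using Qi(1) kgb(2) unfolding con_def by auto
  have gl: "\<And>Cs c. constr_system Cs \<Longrightarrow> Qi \<union> Qj \<subseteq> con Cs \<Longrightarrow> c \<in> Cs \<Longrightarrow>
      (\<forall>r\<in>Ra. inner (constr_normal c) r \<le> 0) \<and> (\<forall>p\<in>Pa. inner (constr_normal c) p \<le> constr_rhs c)
      \<and> (\<forall>cc\<in>Ca. inner (constr_normal c) cc \<le> constr_rhs c)"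
  proof -
    fix Cs c assume h: "constr_system Cs" "Qi \<union> Qj \<subseteq> con Cs" "c \<in> Cs"
    have "\<And>y. y \<in> Qi \<Longrightarrow> inner (constr_normal c) y \<le> constr_rhs c"
      using h sat_imp_le unfolding con_def by blast
    from gen_gens_le[OF gsi Qi(2,3) this]
    show "(\<forall>r\<in>Ra. inner (constr_normal c) r \<le> 0) \<and> (\<forall>p\<in>Pa. inner (constr_normal c) p \<le> constr_rhs c)
      \<and> (\<forall>cc\<in>Ca. inner (constr_normal c) cc \<le> constr_rhs c)" by blast
  qed
  consider (three) "is_strict \<beta>" "\<exists>p\<in>poly_hull (Qi \<union> Qj) - Qj. saturates Pt p \<beta>"
    | (ray) "k = Ray" "\<not> ray_of Qj g"
    | (cp) "k = ClosurePt" "g \<notin> closure Qj"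
    | (pt) "k = Pt" "\<not> is_strict \<beta>" "g \<notin> closure Qj"
    using alt by (cases k) auto
  then show ?thesis
  proof cases
    case three
    then obtain p where p: "p \<in> poly_hull (Qi \<union> Qj)" "p \<notin> Qj" "inner (constr_normal \<beta>) p = constr_rhs \<beta>"
      by auto
    then have "p \<notin> Qi" using satQi three(1) by (auto simp: sat_iff)
    then show ?thesis using p by blast
  next
    case cp
    have g: "g \<in> Ca" "inner (constr_normal \<beta>) g = constr_rhs \<beta>" using kgb cp by auto
    show ?thesis by (rule pc_case[OF g(2) q cp(2) _ satQi]) (use gl g(1) in blast)
  next
    case pt
    have g: "g \<in> Pa" "inner (constr_normal \<beta>) g = constr_rhs \<beta>" using kgb pt by auto
    show ?thesis by (rule pc_case[OF g(2) q pt(3) _ satQi]) (use gl g(1) in blast)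
  next
    case ray
    have g: "g \<in> Ra" "inner (constr_normal \<beta>) g = 0" using kgb ray by auto
    have g0: "g \<noteq> 0" using g fin by auto
    obtain p \<rho> where p: "p \<in> Qj" "0 \<le> \<rho>" "p + \<rho> *\<^sub>R g \<notin> Qj"
      using ray(2) g0 unfolding ray_of_def by auto
    obtain \<beta>' where b': "\<beta>' \<in> Csj" "\<not> satisfies (p + \<rho> *\<^sub>R g) \<beta>'" using p(3) Qj unfolding con_def by auto
    have sp: "satisfies p \<beta>'" using p(1) Qj b'(1) unfolding con_def by auto
    define a' where "a' = constr_normal \<beta>'"
    define b'' where "b'' = constr_rhs \<beta>'"
    have ag: "inner a' g > 0"
    proof (rule ccontr)
      assume "\<not> inner a' g > 0"
      then have "inner a' (p + \<rho> *\<^sub>R g) \<le> inner a' p" using p(2)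
        by (simp add: inner_add_right mult_nonneg_nonpos)
      then have "satisfies (p + \<rho> *\<^sub>R g) \<beta>'" using sat_mono sp a'_def by blast
      then show False using b' by simp
    qed
    define \<rho>' where "\<rho>' = (\<bar>b'' - inner a' q\<bar> + 1) / inner a' g"
    have \<rho>'0: "0 \<le> \<rho>'" using ag unfolding \<rho>'_def by simp
    define y where "y = q + \<rho>' *\<^sub>R g"
    have "inner a' y = inner a' q + \<bar>b'' - inner a' q\<bar> + 1"
      unfolding y_def \<rho>'_def using ag by (simp add: inner_add_right)
    then have "inner a' y > b''" by linarith
    then have "\<not> satisfies y \<beta>'" using sat_imp_le[of y \<beta>'] a'_def b''_def by force
    then have yQj: "y \<notin> Qj" using Qj b'(1) unfolding con_def by auto
    have "inner (constr_normal \<beta>) y = inner (constr_normal \<beta>) q" unfolding y_def using g(2)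
      by (simp add: inner_add_right)
    then have "\<not> satisfies y \<beta>" using q(2) sat_same by blast
    then have yQi: "y \<notin> Qi" using satQi by auto
    have "y \<in> poly_hull (Qi \<union> Qj)"
    proof (rule hull_mem)
      fix Cs c assume h: "constr_system Cs" "Qi \<union> Qj \<subseteq> con Cs" "c \<in> Cs"
      have "satisfies q c" using h q unfolding con_def by auto
      moreover have "inner (constr_normal c) g \<le> 0" using gl[OF h] g(1) by blast
      then have "inner (constr_normal c) y \<le> inner (constr_normal c) q" unfolding y_def using \<rho>'0
        by (simp add: inner_add_right mult_nonneg_nonpos)
      ultimately show "satisfies y c" using sat_mono by blast
    qed
    then show ?thesis using yQi yQj by blast
  qed
qed

theorem theorem4:
  fixes Cs1 Cs2 :: "(real^'n) constr set"
    and R1 P1 C1 R2 P2 C2 :: "(real^'n) set"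
    and Q1 Q2 :: "(real^'n) set"
  assumes "constr_system Cs1" and "constr_system Cs2"
    and "gen_system R1 P1 C1" and "gen_system R2 P2 C2"
    and "Q1 = con Cs1" and "Q1 = gen R1 P1 C1"
    and "Q2 = con Cs2" and "Q2 = gen R2 P2 C2"
    and "Q1 \<noteq> {}" and "Q2 \<noteq> {}"
  shows "poly_hull (Q1 \<union> Q2) \<noteq> Q1 \<union> Q2 \<longleftrightarrow>
         (thm4_cond R1 P1 C1 Cs1 Q2 (poly_hull (Q1 \<union> Q2))
          \<or> thm4_cond R2 P2 C2 Cs2 Q1 (poly_hull (Q1 \<union> Q2)))"
proof
  assume ne: "poly_hull (Q1 \<union> Q2) \<noteq> Q1 \<union> Q2"
  have "Q1 \<union> Q2 \<subseteq> poly_hull (Q1 \<union> Q2)" by (rule hull_sup)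
  then obtain x where x: "x \<in> poly_hull (Q1 \<union> Q2)" "x \<notin> Q1" "x \<notin> Q2" using ne by blast
  have x': "x \<in> poly_hull (Q2 \<union> Q1)" using x(1) by (simp add: Un_commute)
  show "thm4_cond R1 P1 C1 Cs1 Q2 (poly_hull (Q1 \<union> Q2)) \<or> thm4_cond R2 P2 C2 Cs2 Q1 (poly_hull (Q1 \<union> Q2))"
  proof (cases "x \<in> closure Q1")
    case False
    then show ?thesis using caseI[OF assms(1,2,4,5,9,7,8) x(1) x(3) False] by simp
  next
    case c1: True
    show ?thesis
    proof (cases "x \<in> closure Q2")
      case False
      then have "thm4_cond R1 P1 C1 Cs1 Q2 (poly_hull (Q2 \<union> Q1))"
        using caseI[OF assms(2,1,3,7,10,5,6) x' x(2) False] by simp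
      then show ?thesis by (simp add: Un_commute)
    next
      case True
      then show ?thesis using caseII[OF assms(1,3,5,6,9) x(1) c1 x(2,3)] by simp
    qed
  qed
next
  assume c: "thm4_cond R1 P1 C1 Cs1 Q2 (poly_hull (Q1 \<union> Q2)) \<or> thm4_cond R2 P2 C2 Cs2 Q1 (poly_hull (Q1 \<union> Q2))"
  then show "poly_hull (Q1 \<union> Q2) \<noteq> Q1 \<union> Q2"
  proof
    assume "thm4_cond R1 P1 C1 Cs1 Q2 (poly_hull (Q1 \<union> Q2))"
    then show ?thesis using cond_imp[OF assms(3,5,6,9,7)] by blast
  next
    assume "thm4_cond R2 P2 C2 Cs2 Q1 (poly_hull (Q1 \<union> Q2))"
    then have "thm4_cond R2 P2 C2 Cs2 Q1 (poly_hull (Q2 \<union> Q1))" by (simp add: Un_commute)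
    then show ?thesis using cond_imp[OF assms(4,7,8,10,5)] by (auto simp: Un_commute)
  qed
qed

end
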